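(* Let $\mathcal{C}$ be a nonempty chordal $d$-uniform clutter on $[n]$ with multiset $\{N_1,\ldots,N_r\}$, let $N=\max\{N_1,\ldots,N_r\}$, and let $\Delta=\Delta(\mathcal{C})$ be its clique complex, with $\mathbf{h}$-vector $(h_i)$. Then \[ \sum_{i\ge0}h_it^i=\sum_{i=0}^{d-1}\binom{n}{i}t^i(1-t)^{N+d-i-1}+t^{d-1}\sum_{i=1}^r\Big((1-t)^{N-N_i}-(1-t)^{N}\Big). \]
   Context: A $d$-uniform clutter $\mathcal{C}$ on $[n]$ is a set of $d$-subsets of $[n]$. A $(d-1)$-subset $e$ is a submaximal circuit if $e\subset F$ for some $F\in\mathcal{C}$; $V\subseteq[n]$ is a clique if all $d$-subsets of $V$ lie in $\mathcal{C}$ (sets with fewer than $d$ elements are cliques); the clique complex $\Delta(\mathcal{C})$ consists of all cliques. $\mathrm{N}_{\mathcal{C}}(e)=\{c: e\cup\{c\}\in\mathcal{C}\}$, $\mathrm{N}_{\mathcal{C}}[e]=e\cup\mathrm{N}_{\mathcal{C}}(e)$; $e$ is simplicial if it is a submaximal circuit and $\mathrm{N}_{\mathcal{C}}[e]$ is a clique. $\mathcal{C}\setminus e=\{F\in\mathcal{C}:e\not\subset F\}$, and $\mathcal{C}_{e_1\cdots e_i}$ is successive deletion. A simplicial order is a sequence $e_1,\ldots,e_r$ with $e_i$ simplicial in $\mathcal{C}_{e_1\cdots e_{i-1}}$ (in $\mathcal{C}$ for $i=1$) and $\mathcal{C}_{e_1\cdots e_r}=\emptyset$; $\mathcal{C}$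 is chordal if one exists. The multiset of $\mathcal{C}$ is $\{N_1,\ldots,N_r\}$ with $N_i=|\mathrm{N}_{\mathcal{C}_{e_1\cdots e_{i-1}}}(e_i)|$ for a simplicial order (it does not depend on the order chosen). For a simplicial complex $\Delta$ on $[n]$ and a field $K$, the Stanley–Reisner ring $K[\Delta]=K[x_1,\ldots,x_n]/I_\Delta$, $I_\Delta=(\prod_{j\in F}x_j: F\notin\Delta)$, has Hilbert series $Q(t)/(1-t)^{\delta}$ with $\delta=\dim K[\Delta]$ and $Q(t)=\sum_{i=0}^{\delta}h_it^i$; $(h_0,\ldots,h_\delta)$ is the $\mathbf{h}$-vector of $\Delta$. *)

theory Defs
  imports "HOL-Computational_Algebra.Polynomial_FPS"
begin

definition uniform_clutter :: "nat \<Rightarrow> nat \<Rightarrow> nat set set \<Rightarrow> bool" where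
  "uniform_clutter n d C \<longleftrightarrow> (\<forall>F\<in>C. F \<subseteq> {1..n} \<and> card F = d)"

definition submax_circuit :: "nat \<Rightarrow> nat set set \<Rightarrow> nat set \<Rightarrow> bool" where
  "submax_circuit d C e \<longleftrightarrow> card e = d - 1 \<and> (\<exists>F\<in>C. e \<subseteq> F)"

text \<open>Cliques (subsets of [n] all of whose d-subsets lie in C; sets with fewer than d
  elements are vacuously cliques).\<close>
definition is_clique :: "nat \<Rightarrow> nat \<Rightarrow> nat set set \<Rightarrow> nat set \<Rightarrow> bool" where
  "is_clique n d C V \<longleftrightarrow> V \<subseteq> {1..n} \<and> (\<forall>S. S \<subseteq> V \<and> card S = d \<longrightarrow> S \<in> C)"

definition clique_complex :: "nat \<Rightarrow> nat \<Rightarrow> nat set set \<Rightarrow> nat set set" where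
  "clique_complex n d C = {V. is_clique n d C V}"

definition nbhd :: "nat set set \<Rightarrow> nat set \<Rightarrow> nat set" where
  "nbhd C e = {c. insert c e \<in> C}"

definition closed_nbhd :: "nat set set \<Rightarrow> nat set \<Rightarrow> nat set" where
  "closed_nbhd C e = e \<union> nbhd C e"

definition simplicial :: "nat \<Rightarrow> nat \<Rightarrow> nat set set \<Rightarrow> nat set \<Rightarrow> bool" where
  "simplicial n d C e \<longleftrightarrow> submax_circuit d C e \<and> is_clique n d C (closed_nbhd C e)"

definition delete :: "nat set set \<Rightarrow> nat set \<Rightarrow> nat set set" where
  "delete C e = {F\<in>C. \<not> e \<subseteq> F}"

definition deletes :: "nat set set \<Rightarrow> nat set list \<Rightarrow> nat set set" where
  "deletes C es = foldl delete C es"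

definition simplicial_order :: "nat \<Rightarrow> nat \<Rightarrow> nat set set \<Rightarrow> nat set list \<Rightarrow> bool" where
  "simplicial_order n d C es \<longleftrightarrow>
     (\<forall>i<length es. simplicial n d (deletes C (take i es)) (es ! i)) \<and> deletes C es = {}"

definition chordal :: "nat \<Rightarrow> nat \<Rightarrow> nat set set \<Rightarrow> bool" where
  "chordal n d C \<longleftrightarrow> (\<exists>es. simplicial_order n d C es)"

text \<open>The numbers N_i = |N_{C_{e_1...e_{i-1}}}(e_i)| of a simplicial order (as a list,
  indexed from 0).\<close>
definition order_multiset :: "nat set set \<Rightarrow> nat set list \<Rightarrow> nat list" where
  "order_multiset C es = map (\<lambda>i. card (nbhd (deletes C (take i es)) (es ! i))) [0..<length es]"

text \<open>Stanley--Reisner ring K[Delta] of a simplicial complex Delta on [n]: its degree-k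
  component has as K-basis the monomials of degree k whose support is a face of Delta.\<close>
definition sr_hilbert_fun :: "nat \<Rightarrow> nat set set \<Rightarrow> nat \<Rightarrow> nat" where
  "sr_hilbert_fun n \<Delta> k = card {\<alpha> :: nat \<Rightarrow> nat. (\<forall>j. j \<notin> {1..n} \<longrightarrow> \<alpha> j = 0)
        \<and> (\<Sum>j\<in>{1..n}. \<alpha> j) = k \<and> {j\<in>{1..n}. \<alpha> j \<noteq> 0} \<in> \<Delta>}"

definition sr_hilbert_series :: "nat \<Rightarrow> nat set set \<Rightarrow> int fps" where
  "sr_hilbert_series n \<Delta> = Abs_fps (\<lambda>k. int (sr_hilbert_fun n \<Delta> k))"

text \<open>Krull dimension of K[Delta] = maximal cardinality of a face.\<close>
definition sr_dim :: "nat set set \<Rightarrow> nat" where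
  "sr_dim \<Delta> = Max (card ` \<Delta>)"

text \<open>The h-polynomial Q(t) = sum h_i t^i, defined by HS(t) = Q(t)/(1-t)^delta, i.e.
  Q(t) = HS(t) (1-t)^delta as formal power series; h_i are its coefficients.\<close>
definition h_series :: "nat \<Rightarrow> nat set set \<Rightarrow> int fps" where
  "h_series n \<Delta> = sr_hilbert_series n \<Delta> * (1 - fps_X) ^ sr_dim \<Delta>"

definition h_vector :: "nat \<Rightarrow> nat set set \<Rightarrow> nat \<Rightarrow> int" where
  "h_vector n \<Delta> i = fps_nth (h_series n \<Delta>) i"

end

theory Submission
  imports Defs
begin
unbundle fps_syntax


definition SF :: "nat set \<Rightarrow> nat \<Rightarrow> (nat \<Rightarrow> nat) set" where
  "SF F k = {\<alpha>. (\<forall>j. j \<notin> F \<longrightarrow> \<alpha> j = 0) \<and> (\<forall>j\<in>F. \<alpha> j > 0) \<and> (\<Sum>j\<in>F. \<alpha> j) = k}"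

lemma finite_SF: assumes "finite F" shows "finite (SF F k)"
proof -
  have "SF F k \<subseteq> {f. \<forall>x. (x \<in> F \<longrightarrow> f x \<in> {0..k}) \<and> (x \<notin> F \<longrightarrow> f x = 0)}"
  proof
    fix \<alpha> assume a: "\<alpha> \<in> SF F k"
    { fix x assume "x \<in> F"
      hence "\<alpha> x \<le> (\<Sum>j\<in>F. \<alpha> j)" using assms by (intro member_le_sum) auto
      hence "\<alpha> x \<le> k" using a by (simp add: SF_def) }
    thus "\<alpha> \<in> {f. \<forall>x. (x \<in> F \<longrightarrow> f x \<in> {0..k}) \<and> (x \<notin> F \<longrightarrow> f x = 0)}"
      using a by (auto simp: SF_def)
  qed
  thus ?thesis by (rule finite_subset) (intro finite_set_of_finite_funs assms, simp)
qed

lemma SF_empty: "SF {} k = (if k = 0 then {\<lambda>_. 0} else {})"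
  by (auto simp: SF_def)

lemma SF_insert:
  assumes "finite F" "a \<notin> F"
  shows "SF (insert a F) k = (\<Union>i\<in>{1..k}. (\<lambda>\<beta>. \<beta>(a:=i)) ` SF F (k - i))"
proof
  show "SF (insert a F) k \<subseteq> (\<Union>i\<in>{1..k}. (\<lambda>\<beta>. \<beta>(a:=i)) ` SF F (k - i))"
  proof
    fix \<alpha> assume h: "\<alpha> \<in> SF (insert a F) k"
    have s: "\<alpha> a + (\<Sum>j\<in>F. \<alpha> j) = k" using h assms by (simp add: SF_def)
    have pos: "\<alpha> a > 0" using h by (simp add: SF_def)
    have "(\<Sum>j\<in>F. (\<alpha>(a:=0)) j) = (\<Sum>j\<in>F. \<alpha> j)" using assms by (intro sum.cong) auto
    hence "\<alpha>(a:=0) \<in> SF F (k - \<alpha> a)" using h s assms by (auto simp: SF_def)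
    moreover have "\<alpha> = (\<alpha>(a:=0))(a := \<alpha> a)" by simp
    moreover have "\<alpha> a \<in> {1..k}" using s pos by auto
    ultimately show "\<alpha> \<in> (\<Union>i\<in>{1..k}. (\<lambda>\<beta>. \<beta>(a:=i)) ` SF F (k - i))" by blast
  qed
next
  show "(\<Union>i\<in>{1..k}. (\<lambda>\<beta>. \<beta>(a:=i)) ` SF F (k - i)) \<subseteq> SF (insert a F) k"
  proof clarify
    fix i \<beta> assume i: "i \<in> {1..k}" and b: "\<beta> \<in> SF F (k - i)"
    have "(\<Sum>j\<in>F. (\<beta>(a:=i)) j) = (\<Sum>j\<in>F. \<beta> j)" using assms by (intro sum.cong) auto
    thus "\<beta>(a:=i) \<in> SF (insert a F) k" using i b assms by (auto simp: SF_def)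
  qed
qed

lemma card_SF_insert:
  assumes "finite F" "a \<notin> F"
  shows "card (SF (insert a F) k) = (\<Sum>i\<in>{1..k}. card (SF F (k - i)))"
proof -
  have "card (SF (insert a F) k) = (\<Sum>i\<in>{1..k}. card ((\<lambda>\<beta>. \<beta>(a:=i)) ` SF F (k - i)))"
    unfolding SF_insert[OF assms]
  proof (rule card_UN_disjoint)
    show "\<forall>i\<in>{1..k}. finite ((\<lambda>\<beta>. \<beta>(a:=i)) ` SF F (k - i))" using finite_SF[OF assms(1)] by blast
    show "\<forall>i\<in>{1..k}. \<forall>j\<in>{1..k}. i \<noteq> j \<longrightarrow>
      (\<lambda>\<beta>. \<beta>(a:=i)) ` SF F (k - i) \<inter> (\<lambda>\<beta>. \<beta>(a:=j)) ` SF F (k - j) = {}"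
    proof (intro ballI impI)
      fix i j :: nat assume "i \<noteq> j"
      have "x(a:=i) \<noteq> y(a:=j)" for x y :: "nat \<Rightarrow> nat" using \<open>i \<noteq> j\<close> by (metis fun_upd_same)
      thus "(\<lambda>\<beta>. \<beta>(a:=i)) ` SF F (k - i) \<inter> (\<lambda>\<beta>. \<beta>(a:=j)) ` SF F (k - j) = {}" by blast
    qed
  qed simp
  also have "\<dots> = (\<Sum>i\<in>{1..k}. card (SF F (k - i)))"
  proof (intro sum.cong refl card_image inj_onI)
    fix i x y assume "x \<in> SF F (k - i)" "y \<in> SF F (k - i)" "x(a := i) = y(a := i)"
    hence "(x(a := i))(a:=0) = (y(a := i))(a:=0)" by simp
    moreover have "x a = 0" "y a = 0" using assms(2) \<open>x \<in> SF F (k - i)\<close> \<open>y \<in> SF F (k - i)\<close> by (auto simp: SF_def)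
    ultimately show "x = y" by (metis fun_upd_idem_iff fun_upd_upd)
  qed
  finally show ?thesis .
qed

definition AF :: "nat set \<Rightarrow> int fps" where
  "AF F = Abs_fps (\<lambda>k. int (card (SF F k)))"

definition BB :: "int fps" where "BB = Abs_fps (\<lambda>i. if i = 0 then 0 else 1)"

lemma BB_mult: "BB * (1 - fps_X) = fps_X"
proof (rule fps_ext)
  fix k
  show "(BB * (1 - fps_X)) $ k = fps_X $ k"
  proof (cases k)
    case 0 thus ?thesis by (simp add: BB_def algebra_simps)
  next
    case (Suc m)
    have "(BB * (1 - fps_X)) $ k = BB $ k - (BB * fps_X) $ k" by (simp add: algebra_simps)
    also have "\<dots> = BB $ k - BB $ m" using Suc by simp
    finally show ?thesis using Suc by (simp add: BB_def)
  qed
qed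

lemma AF_insert:
  assumes "finite F" "a \<notin> F"
  shows "AF (insert a F) = BB * AF F"
proof (rule fps_ext)
  fix k
  have "(BB * AF F) $ k = (\<Sum>i=0..k. BB $ i * AF F $ (k - i))" by (rule fps_mult_nth)
  also have "\<dots> = (\<Sum>i\<in>{1..k}. BB $ i * AF F $ (k - i))"
    by (rule sum.mono_neutral_right) (auto simp: BB_def)
  also have "\<dots> = (\<Sum>i\<in>{1..k}. int (card (SF F (k - i))))"
    by (intro sum.cong) (auto simp: BB_def AF_def)
  finally show "AF (insert a F) $ k = (BB * AF F) $ k"
    by (simp add: AF_def card_SF_insert[OF assms])
qed

lemma AF_power: "finite F \<Longrightarrow> AF F * (1 - fps_X) ^ card F = fps_X ^ card F"
proof (induction F rule: finite_induct)
  case empty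
  have "AF {} = 1" by (rule fps_ext) (simp add: AF_def SF_empty)
  thus ?case by simp
next
  case (insert a F)
  have "AF (insert a F) * (1 - fps_X) ^ card (insert a F)
      = (BB * (1 - fps_X)) * (AF F * (1 - fps_X) ^ card F)"
    using insert by (simp add: AF_insert algebra_simps)
  also have "\<dots> = fps_X ^ card (insert a F)" using insert by (simp add: BB_mult)
  finally show ?case .
qed


lemma hilbert_fun_sum:
  assumes "\<Delta> \<subseteq> Pow {1..n}"
  shows "sr_hilbert_fun n \<Delta> k = (\<Sum>F\<in>\<Delta>. card (SF F k))"
proof -
  have fin\<Delta>: "finite \<Delta>" using assms finite_subset by (metis finite_Pow_iff finite_atLeastAtMost)
  have eq: "{\<alpha> :: nat \<Rightarrow> nat. (\<forall>j. j \<notin> {1..n} \<longrightarrow> \<alpha> j = 0)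
        \<and> (\<Sum>j\<in>{1..n}. \<alpha> j) = k \<and> {j\<in>{1..n}. \<alpha> j \<noteq> 0} \<in> \<Delta>} = (\<Union>F\<in>\<Delta>. SF F k)"
  proof (intro equalityI subsetI)
    fix \<alpha> assume h: "\<alpha> \<in> {\<alpha> :: nat \<Rightarrow> nat. (\<forall>j. j \<notin> {1..n} \<longrightarrow> \<alpha> j = 0)
        \<and> (\<Sum>j\<in>{1..n}. \<alpha> j) = k \<and> {j\<in>{1..n}. \<alpha> j \<noteq> 0} \<in> \<Delta>}"
    define F where "F = {j\<in>{1..n}. \<alpha> j \<noteq> 0}"
    have "(\<Sum>j\<in>F. \<alpha> j) = (\<Sum>j\<in>{1..n}. \<alpha> j)"
      by (rule sum.mono_neutral_left) (auto simp: F_def)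
    hence "\<alpha> \<in> SF F k" using h by (auto simp: SF_def F_def)
    moreover have "F \<in> \<Delta>" using h by (simp add: F_def)
    ultimately show "\<alpha> \<in> (\<Union>F\<in>\<Delta>. SF F k)" by blast
  next
    fix \<alpha> assume "\<alpha> \<in> (\<Union>F\<in>\<Delta>. SF F k)"
    then obtain F where F: "F \<in> \<Delta>" "\<alpha> \<in> SF F k" by blast
    have Fs: "F \<subseteq> {1..n}" using F assms by auto
    have "(\<Sum>j\<in>F. \<alpha> j) = (\<Sum>j\<in>{1..n}. \<alpha> j)"
      by (rule sum.mono_neutral_left) (use F Fs in \<open>auto simp: SF_def\<close>)
    moreover have "{j\<in>{1..n}. \<alpha> j \<noteq> 0} = F" using F Fs by (auto simp: SF_def)
    ultimately show "\<alpha> \<in> {\<alpha> :: nat \<Rightarrow> nat. (\<forall>j. j \<notin> {1..n} \<longrightarrow> \<alpha> j = 0)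
        \<and> (\<Sum>j\<in>{1..n}. \<alpha> j) = k \<and> {j\<in>{1..n}. \<alpha> j \<noteq> 0} \<in> \<Delta>}"
      using F Fs by (auto simp: SF_def)
  qed
  have "card (\<Union>F\<in>\<Delta>. SF F k) = (\<Sum>F\<in>\<Delta>. card (SF F k))"
  proof (rule card_UN_disjoint[OF fin\<Delta>])
    show "\<forall>F\<in>\<Delta>. finite (SF F k)" using assms by (auto intro!: finite_SF intro: finite_subset)
    show "\<forall>F\<in>\<Delta>. \<forall>G\<in>\<Delta>. F \<noteq> G \<longrightarrow> SF F k \<inter> SF G k = {}"
    proof (intro ballI impI)
      fix F G :: "nat set" assume "F \<noteq> G"
      have "SF F k \<subseteq> {\<alpha>. {j. \<alpha> j \<noteq> 0} = F}" "SF G k \<subseteq> {\<alpha>. {j. \<alpha> j \<noteq> 0} = G}"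
        by (auto simp: SF_def)
      thus "SF F k \<inter> SF G k = {}" using \<open>F \<noteq> G\<close> by blast
    qed
  qed
  thus ?thesis unfolding sr_hilbert_fun_def eq .
qed

lemma h_series_faces:
  assumes "\<Delta> \<subseteq> Pow {1..n}" and "\<forall>F\<in>\<Delta>. card F \<le> sr_dim \<Delta>"
  shows "h_series n \<Delta> = (\<Sum>F\<in>\<Delta>. fps_X ^ card F * (1 - fps_X) ^ (sr_dim \<Delta> - card F))"
proof -
  have "sr_hilbert_series n \<Delta> = (\<Sum>F\<in>\<Delta>. AF F)"
    by (rule fps_ext) (simp add: sr_hilbert_series_def fps_sum_nth AF_def hilbert_fun_sum[OF assms(1)])
  hence "h_series n \<Delta> = (\<Sum>F\<in>\<Delta>. AF F * (1 - fps_X) ^ sr_dim \<Delta>)"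
    by (simp add: h_series_def sum_distrib_right)
  also have "\<dots> = (\<Sum>F\<in>\<Delta>. fps_X ^ card F * (1 - fps_X) ^ (sr_dim \<Delta> - card F))"
  proof (rule sum.cong[OF refl])
    fix F assume F: "F \<in> \<Delta>"
    have fin: "finite F" using F assms(1) by (auto intro: finite_subset)
    have "AF F * (1 - fps_X) ^ sr_dim \<Delta> = AF F * ((1 - fps_X) ^ card F * (1 - fps_X) ^ (sr_dim \<Delta> - card F))"
      using F assms(2) by (simp add: power_add[symmetric])
    also have "\<dots> = fps_X ^ card F * (1 - fps_X) ^ (sr_dim \<Delta> - card F)"
      by (simp add: mult.assoc[symmetric] AF_power[OF fin])
    finally show "AF F * (1 - fps_X) ^ sr_dim \<Delta> = fps_X ^ card F * (1 - fps_X) ^ (sr_dim \<Delta> - card F)" .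
  qed
  finally show ?thesis .
qed



lemma deletes_Cons: "deletes C (e#es) = deletes (delete C e) es"
  by (simp add: deletes_def)

lemma simplicial_order_Cons:
  "simplicial_order n d C (e#es) \<longleftrightarrow> simplicial n d C e \<and> simplicial_order n d (delete C e) es"
proof -
  have "(\<forall>i<length (e#es). simplicial n d (deletes C (take i (e#es))) ((e#es) ! i))
     \<longleftrightarrow> simplicial n d C e \<and> (\<forall>i<length es. simplicial n d (deletes (delete C e) (take i es)) (es ! i))"
    (is "?L \<longleftrightarrow> ?R")
  proof
    assume ?L
    have "simplicial n d C e" using spec[OF \<open>?L\<close>, of 0] by (simp add: deletes_def)
    moreover have "\<forall>i<length es. simplicial n d (deletes (delete C e) (take i es)) (es ! i)"
    proof (intro allI impI)
      fix i assume "i < length es"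
      thus "simplicial n d (deletes (delete C e) (take i es)) (es ! i)"
        using spec[OF \<open>?L\<close>, of "Suc i"] by (simp add: deletes_Cons)
    qed
    ultimately show ?R by blast
  next
    assume R: ?R
    show ?L
    proof (intro allI impI)
      fix i assume "i < length (e#es)"
      thus "simplicial n d (deletes C (take i (e#es))) ((e#es) ! i)"
        using R by (cases i) (auto simp: deletes_Cons, simp add: deletes_def)
    qed
  qed
  thus ?thesis by (simp add: simplicial_order_def deletes_Cons)
qed

lemma simplicial_order_Nil: "simplicial_order n d C [] \<longleftrightarrow> C = {}"
  by (simp add: simplicial_order_def deletes_def)

lemma order_multiset_Nil: "order_multiset C [] = []"
  by (simp add: order_multiset_def)

lemma order_multiset_Cons:
  "order_multiset C (e#es) = card (nbhd C e) # order_multiset (delete C e) es"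
proof -
  have "[0..<length (e#es)] = 0 # map Suc [0..<length es]"
    by (simp add: upt_conv_Cons map_Suc_upt del: upt_Suc)
  thus ?thesis by (simp add: order_multiset_def deletes_def)
qed

lemma clique_mono: "is_clique n d C V \<Longrightarrow> W \<subseteq> V \<Longrightarrow> is_clique n d C W"
  by (auto simp: is_clique_def)

lemma clique_sub: "C' \<subseteq> C \<Longrightarrow> is_clique n d C' V \<Longrightarrow> is_clique n d C V"
  by (auto simp: is_clique_def)

lemma uniform_delete: "uniform_clutter n d C \<Longrightarrow> uniform_clutter n d (delete C e)"
  by (auto simp: uniform_clutter_def delete_def)

locale simp_setup =
  fixes n d :: nat and C :: "nat set set" and e :: "nat set"
  assumes d1: "d \<ge> 1" and U: "uniform_clutter n d C" and S: "simplicial n d C e"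
begin

lemma card_e: "card e = d - 1" using S by (simp add: simplicial_def submax_circuit_def)

lemma e_sub: "finite e \<and> e \<subseteq> {1..n}"
proof -
  obtain F where "F \<in> C" "e \<subseteq> F" using S by (auto simp: simplicial_def submax_circuit_def)
  moreover have "F \<subseteq> {1..n}" using U \<open>F \<in> C\<close> by (auto simp: uniform_clutter_def)
  ultimately show ?thesis by (meson finite_atLeastAtMost finite_subset order_trans)
qed

lemma fin_e: "finite e" using e_sub by blast

lemma nb_disj: "nbhd C e \<inter> e = {}"
proof (rule ccontr)
  assume "nbhd C e \<inter> e \<noteq> {}"
  then obtain c where "c \<in> e" "insert c e \<in> C" by (auto simp: nbhd_def)
  hence "e \<in> C" by (simp add: insert_absorb)
  hence "card e = d" using U by (auto simp: uniform_clutter_def)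
  thus False using card_e d1 by simp
qed

lemma nb_sub: "nbhd C e \<subseteq> {1..n}"
  using U by (auto simp: nbhd_def uniform_clutter_def)

lemma fin_nb: "finite (nbhd C e)" using nb_sub finite_subset by blast

lemma card_ins: "c \<notin> e \<Longrightarrow> card (insert c e) = d"
  using fin_e card_e d1 by simp

definition EE where "EE = (\<lambda>A. e \<union> A) ` {A. A \<subseteq> nbhd C e \<and> A \<noteq> {}}"

lemma decomp: "clique_complex n d C = clique_complex n d (delete C e) \<union> EE"
proof (intro equalityI subsetI)
  fix V assume "V \<in> clique_complex n d C"
  hence V: "is_clique n d C V" by (simp add: clique_complex_def)
  show "V \<in> clique_complex n d (delete C e) \<union> EE"
  proof (cases "is_clique n d (delete C e) V")
    case True thus ?thesis by (simp add: clique_complex_def)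
  next
    case False
    have Vs: "V \<subseteq> {1..n}" using V by (simp add: is_clique_def)
    hence finV: "finite V" using finite_subset by blast
    from False V obtain S where S: "S \<subseteq> V" "card S = d" "S \<in> C" "S \<notin> delete C e"
      by (auto simp: is_clique_def)
    hence eS: "e \<subseteq> S" by (simp add: delete_def)
    hence eV: "e \<subseteq> V" using S by blast
    have "d \<le> card V" using S finV card_mono by metis
    have ne: "V - e \<noteq> {}"
    proof
      assume "V - e = {}" hence "V \<subseteq> e" by blast
      hence "card V \<le> card e" using card_mono fin_e by blast
      thus False using \<open>d \<le> card V\<close> card_e d1 by simp
    qed
    have sub: "V - e \<subseteq> nbhd C e"
    proof
      fix c assume c: "c \<in> V - e"
      have "insert c e \<subseteq> V" using c eV by blast
      moreover have "card (insert c e) = d" using c card_ins by blast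
      ultimately show "c \<in> nbhd C e" using V by (auto simp: is_clique_def nbhd_def)
    qed
    have "V = e \<union> (V - e)" using eV by blast
    thus ?thesis using ne sub unfolding EE_def by blast
  qed
next
  fix V assume "V \<in> clique_complex n d (delete C e) \<union> EE"
  thus "V \<in> clique_complex n d C"
  proof
    assume "V \<in> clique_complex n d (delete C e)"
    thus ?thesis using clique_sub[of "delete C e" C] by (auto simp: clique_complex_def delete_def)
  next
    assume "V \<in> EE"
    hence "V \<subseteq> closed_nbhd C e" by (auto simp: EE_def closed_nbhd_def)
    thus ?thesis using S clique_mono by (auto simp: clique_complex_def simplicial_def)
  qed
qed

lemma disj: "clique_complex n d (delete C e) \<inter> EE = {}"
proof (rule ccontr)
  assume "clique_complex n d (delete C e) \<inter> EE \<noteq> {}"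
  then obtain A where A: "A \<subseteq> nbhd C e" "A \<noteq> {}" "is_clique n d (delete C e) (e \<union> A)"
    by (auto simp: EE_def clique_complex_def)
  then obtain a where a: "a \<in> A" by blast
  have ae: "a \<notin> e" using a A nb_disj by blast
  have "insert a e \<in> C" using a A by (auto simp: nbhd_def)
  moreover have "insert a e \<subseteq> e \<union> A" using a by blast
  moreover have "card (insert a e) = d" using card_ins ae by blast
  ultimately have "insert a e \<in> delete C e" using A by (auto simp: is_clique_def)
  thus False by (auto simp: delete_def)
qed

lemma inj_EE: "inj_on (\<lambda>A. e \<union> A) {A. A \<subseteq> nbhd C e \<and> A \<noteq> {}}"
proof (rule inj_onI)
  fix A B assume "A \<in> {A. A \<subseteq> nbhd C e \<and> A \<noteq> {}}" "B \<in> {A. A \<subseteq> nbhd C e \<and> A \<noteq> {}}" "e \<union> A = e \<union> B"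
  thus "A = B" using nb_disj by blast
qed

lemma card_EE: assumes "A \<subseteq> nbhd C e" shows "card (e \<union> A) = d - 1 + card A"
proof -
  have "finite A" using assms fin_nb finite_subset by blast
  moreover have "e \<inter> A = {}" using assms nb_disj by blast
  ultimately show ?thesis using card_Un_disjoint[OF fin_e, of A] card_e by simp
qed

lemma closed_clique: "e \<union> nbhd C e \<in> clique_complex n d C"
  using S by (simp add: simplicial_def closed_nbhd_def clique_complex_def)

end

lemma clique_complex_empty:
  "clique_complex n d {} = {V. V \<subseteq> {1..n} \<and> card V < d}"
proof (intro equalityI subsetI)
  fix V assume "V \<in> clique_complex n d {}"
  hence V: "V \<subseteq> {1..n}" "\<forall>S\<subseteq>V. card S \<noteq> d" by (auto simp: clique_complex_def is_clique_def)
  have "\<not> d \<le> card V"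
  proof
    assume "d \<le> card V"
    then obtain S where "S \<subseteq> V" "card S = d" by (rule obtain_subset_with_card_n)
    thus False using V by blast
  qed
  thus "V \<in> {V. V \<subseteq> {1..n} \<and> card V < d}" using V by simp
next
  fix V assume V: "V \<in> {V. V \<subseteq> {1..n} \<and> card V < d}"
  hence "finite V" using finite_subset by blast
  have "card S < d" if "S \<subseteq> V" for S
    using card_mono[OF \<open>finite V\<close> that] V by simp
  hence "\<forall>S\<subseteq>V. card S < d" by blast
  thus "V \<in> clique_complex n d {}" using V by (auto simp: clique_complex_def is_clique_def)
qed



lemma subsets_binom:
  fixes x y :: "'a::comm_semiring_1"
  assumes "finite N"
  shows "(\<Sum>A\<in>Pow N. x ^ card A * y ^ (card N - card A)) = (x + y) ^ card N"
proof -
  have "(x + y) ^ card N = (\<Prod>_\<in>N. x + y)" by simp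
  also have "\<dots> = (\<Sum>A\<in>Pow N. (\<Prod>_\<in>A. x) * (\<Prod>_\<in>N - A. y))" by (rule prod_add[OF assms])
  also have "\<dots> = (\<Sum>A\<in>Pow N. x ^ card A * y ^ (card N - card A))"
  proof (rule sum.cong[OF refl])
    fix A assume "A \<in> Pow N"
    hence "card (N - A) = card N - card A" using assms by (meson PowD card_Diff_subset finite_subset)
    thus "(\<Prod>_\<in>A. x) * (\<Prod>_\<in>N - A. y) = x ^ card A * y ^ (card N - card A)" by simp
  qed
  finally show ?thesis by simp
qed

lemma cc_sub: "clique_complex n d C \<subseteq> Pow {1..n}"
  by (auto simp: clique_complex_def is_clique_def)

lemma fin_cc: "finite (clique_complex n d C)"
  using cc_sub finite_subset by (metis finite_Pow_iff finite_atLeastAtMost)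

context simp_setup begin

lemma EE_sum:
  assumes m: "d - 1 + card (nbhd C e) \<le> m"
  shows "(\<Sum>V\<in>EE. fps_X ^ card V * (1 - fps_X) ^ (m - card V) :: int fps)
       = fps_X ^ (d - 1) * ((1 - fps_X) ^ (m - (d - 1) - card (nbhd C e)) - (1 - fps_X) ^ (m - (d - 1)))"
proof -
  define X :: "int fps" where "X = fps_X"
  define T :: "int fps" where "T = 1 - fps_X"
  define k where "k = card (nbhd C e)"
  define M where "M = m - (d - 1)"
  define P where "P = {A. A \<subseteq> nbhd C e \<and> A \<noteq> {}}"
  have kM: "k \<le> M" using m by (simp add: k_def M_def)
  have "(\<Sum>V\<in>EE. X ^ card V * T ^ (m - card V)) = (\<Sum>A\<in>P. X ^ card (e \<union> A) * T ^ (m - card (e \<union> A)))"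
    unfolding EE_def P_def by (rule sum.reindex[OF inj_EE, unfolded comp_def])
  also have "\<dots> = (\<Sum>A\<in>P. (X ^ (d - 1) * T ^ (M - k)) * (X ^ card A * T ^ (k - card A)))"
  proof (rule sum.cong[OF refl])
    fix A assume "A \<in> P"
    hence A: "A \<subseteq> nbhd C e" by (simp add: P_def)
    have "card A \<le> k" using card_mono[OF fin_nb A] by (simp add: k_def)
    hence "m - card (e \<union> A) = (M - k) + (k - card A)" using card_EE[OF A] kM by (simp add: M_def)
    thus "X ^ card (e \<union> A) * T ^ (m - card (e \<union> A)) = (X ^ (d - 1) * T ^ (M - k)) * (X ^ card A * T ^ (k - card A))"
      using card_EE[OF A] by (simp add: power_add algebra_simps)
  qed
  also have "\<dots> = (X ^ (d - 1) * T ^ (M - k)) * (\<Sum>A\<in>P. X ^ card A * T ^ (k - card A))"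
    by (simp add: sum_distrib_left)
  also have "(\<Sum>A\<in>P. X ^ card A * T ^ (k - card A)) = 1 - T ^ k"
  proof -
    have "Pow (nbhd C e) = insert {} P" by (auto simp: P_def)
    moreover have "{} \<notin> P" "finite P" using fin_nb by (auto simp: P_def)
    ultimately have "(\<Sum>A\<in>Pow (nbhd C e). X ^ card A * T ^ (k - card A)) = T ^ k + (\<Sum>A\<in>P. X ^ card A * T ^ (k - card A))"
      by simp
    moreover have "(\<Sum>A\<in>Pow (nbhd C e). X ^ card A * T ^ (k - card A)) = 1"
      using subsets_binom[OF fin_nb, of X T] by (simp add: k_def X_def T_def)
    ultimately show ?thesis by (simp add: algebra_simps)
  qed
  also have "(X ^ (d - 1) * T ^ (M - k)) * (1 - T ^ k) = X ^ (d - 1) * (T ^ (M - k) - T ^ M)"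
  proof -
    have "T ^ M = T ^ (M - k) * T ^ k" using kM by (simp add: power_add[symmetric])
    thus ?thesis by (simp add: algebra_simps)
  qed
  finally show ?thesis by (simp add: X_def T_def M_def k_def)
qed

end

lemma base_sum:
  fixes g :: "nat \<Rightarrow> 'a::comm_semiring_1"
  shows "(\<Sum>V\<in>{V. V \<subseteq> {1..n} \<and> card V < d}. g (card V)) = (\<Sum>i<d. of_nat (n choose i) * g i)"
proof -
  have eq: "{V. V \<subseteq> {1..n} \<and> card V < d} = (\<Union>i\<in>{..<d}. {V. V \<subseteq> {1..n} \<and> card V = i})" by auto
  have "(\<Sum>V\<in>{V. V \<subseteq> {1..n} \<and> card V < d}. g (card V))
      = (\<Sum>i<d. \<Sum>V\<in>{V. V \<subseteq> {1..n} \<and> card V = i}. g (card V))"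
    unfolding eq
    by (rule sum.UNION_disjoint) (auto intro: finite_subset[of _ "Pow {1..n}"])
  also have "\<dots> = (\<Sum>i<d. of_nat (n choose i) * g i)"
  proof (rule sum.cong[OF refl])
    fix i
    have "(\<Sum>V\<in>{V. V \<subseteq> {1..n} \<and> card V = i}. g (card V)) = (\<Sum>V\<in>{V. V \<subseteq> {1..n} \<and> card V = i}. g i)"
      by (rule sum.cong) auto
    also have "\<dots> = of_nat (n choose i) * g i"
      using n_subsets[of "{1..n}" i] by simp
    finally show "(\<Sum>V\<in>{V. V \<subseteq> {1..n} \<and> card V = i}. g (card V)) = of_nat (n choose i) * g i" .
  qed
  finally show ?thesis .
qed

lemma main_sum:
  assumes "d \<ge> 1" "uniform_clutter n d C" "simplicial_order n d C es"
    "\<forall>x\<in>set (order_multiset C es). d - 1 + x \<le> m"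
  shows "(\<Sum>V\<in>clique_complex n d C. fps_X ^ card V * (1 - fps_X) ^ (m - card V) :: int fps)
    = (\<Sum>i<d. of_nat (n choose i) * (fps_X ^ i * (1 - fps_X) ^ (m - i)))
      + (\<Sum>x\<leftarrow>order_multiset C es. fps_X ^ (d - 1) * ((1 - fps_X) ^ (m - (d - 1) - x) - (1 - fps_X) ^ (m - (d - 1))))"
  using assms(2-4)
proof (induction es arbitrary: C)
  case Nil
  hence "C = {}" by (simp add: simplicial_order_Nil)
  thus ?case using base_sum[of "\<lambda>i. fps_X ^ i * (1 - fps_X) ^ (m - i) :: int fps" n d]
    by (simp add: order_multiset_Nil clique_complex_empty)
next
  case (Cons e es)
  have S: "simplicial n d C e" and SO: "simplicial_order n d (delete C e) es"
    using Cons.prems by (auto simp: simplicial_order_Cons)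
  interpret simp_setup n d C e using assms(1) Cons.prems(1) S by unfold_locales
  note IH = Cons.IH[OF uniform_delete[OF Cons.prems(1)] SO]
  have finEE: "finite EE" using finite_subset[OF _ fin_cc[of n d C]] decomp by blast
  have m1: "d - 1 + card (nbhd C e) \<le> m" and m2: "\<forall>x\<in>set (order_multiset (delete C e) es). d - 1 + x \<le> m"
    using Cons.prems(3) by (auto simp: order_multiset_Cons)
  have "(\<Sum>V\<in>clique_complex n d C. fps_X ^ card V * (1 - fps_X) ^ (m - card V) :: int fps)
     = (\<Sum>V\<in>clique_complex n d (delete C e). fps_X ^ card V * (1 - fps_X) ^ (m - card V))
       + (\<Sum>V\<in>EE. fps_X ^ card V * (1 - fps_X) ^ (m - card V))"
    unfolding decomp by (rule sum.union_disjoint[OF fin_cc finEE disj])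
  also note IH[OF m2]
  also note EE_sum[OF m1]
  finally show ?case by (simp add: order_multiset_Cons algebra_simps)
qed



lemma dim_upper:
  assumes "d \<ge> 1" "uniform_clutter n d C" "simplicial_order n d C es" "V \<in> clique_complex n d C"
  shows "card V < d \<or> (\<exists>x\<in>set (order_multiset C es). card V \<le> d - 1 + x)"
  using assms(2-4)
proof (induction es arbitrary: C)
  case Nil
  hence "C = {}" by (simp add: simplicial_order_Nil)
  thus ?case using Nil by (simp add: clique_complex_empty)
next
  case (Cons e es)
  have S: "simplicial n d C e" and SO: "simplicial_order n d (delete C e) es"
    using Cons.prems by (auto simp: simplicial_order_Cons)
  interpret simp_setup n d C e using assms(1) Cons.prems(1) S by unfold_locales
  from Cons.prems(3) have "V \<in> clique_complex n d (delete C e) \<or> V \<in> EE" using decomp by blast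
  thus ?case
  proof
    assume "V \<in> clique_complex n d (delete C e)"
    thus ?case using Cons.IH[OF uniform_delete[OF Cons.prems(1)] SO] by (auto simp: order_multiset_Cons)
  next
    assume "V \<in> EE"
    then obtain A where A: "A \<subseteq> nbhd C e" "V = e \<union> A" by (auto simp: EE_def)
    have "card V \<le> d - 1 + card (nbhd C e)" using card_EE[OF A(1)] A card_mono[OF fin_nb A(1)] by simp
    thus ?case by (simp add: order_multiset_Cons)
  qed
qed

lemma dim_lower:
  assumes "d \<ge> 1" "uniform_clutter n d C" "simplicial_order n d C es" "x \<in> set (order_multiset C es)"
  shows "\<exists>V\<in>clique_complex n d C. card V = d - 1 + x"
  using assms(2-4)
proof (induction es arbitrary: C)
  case Nil
  thus ?case by (simp add: order_multiset_Nil)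
next
  case (Cons e es)
  have S: "simplicial n d C e" and SO: "simplicial_order n d (delete C e) es"
    using Cons.prems by (auto simp: simplicial_order_Cons)
  interpret simp_setup n d C e using assms(1) Cons.prems(1) S by unfold_locales
  from Cons.prems(3) have "x = card (nbhd C e) \<or> x \<in> set (order_multiset (delete C e) es)"
    by (simp add: order_multiset_Cons)
  thus ?case
  proof
    assume "x = card (nbhd C e)"
    thus ?case using closed_clique card_EE[OF order_refl] by blast
  next
    assume "x \<in> set (order_multiset (delete C e) es)"
    thus ?case using Cons.IH[OF uniform_delete[OF Cons.prems(1)] SO] decomp by blast
  qed
qed

lemma T_poly: "fps_of_poly [:1, -1:] = (1 - fps_X :: int fps)"
  by (simp add: fps_of_poly_pCons fps_of_poly_const fps_const_neg[symmetric])

theorem corollary2p3: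
  fixes n d :: nat and C :: "nat set set" and es :: "nat set list"
  assumes "d \<ge> 1"
    and "uniform_clutter n d C"
    and "C \<noteq> {}"
    and "simplicial_order n d C es"
  shows "let Ns = order_multiset C es; N = Max (set Ns); r = length Ns;
             T = [:1, -1:] :: int poly
         in Abs_fps (h_vector n (clique_complex n d C)) =
            fps_of_poly
              ((\<Sum>i=0..d-1. smult (int (n choose i)) (monom 1 i * T ^ (N + d - i - 1)))
               + monom 1 (d - 1) * (\<Sum>i<r. T ^ (N - Ns ! i) - T ^ N))"
proof -
  define Ns where "Ns = order_multiset C es"
  define N where "N = Max (set Ns)"
  define \<Delta> where "\<Delta> = clique_complex n d C"
  have "es \<noteq> []" using assms(3,4) by (auto simp: simplicial_order_Nil)
  hence "Ns \<noteq> []" by (simp add: Ns_def order_multiset_def)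
  hence NNs: "N \<in> set Ns" and Nmax: "\<forall>x\<in>set Ns. x \<le> N" by (simp_all add: N_def)
  have dim: "sr_dim \<Delta> = N + d - 1"
    unfolding sr_dim_def
  proof (rule Max_eqI)
    show "finite (card ` \<Delta>)" by (simp add: \<Delta>_def fin_cc)
    show "\<And>y. y \<in> card ` \<Delta> \<Longrightarrow> y \<le> N + d - 1"
    proof -
      fix y assume "y \<in> card ` \<Delta>"
      then obtain V where "V \<in> \<Delta>" "y = card V" by blast
      moreover have "card V < d \<or> (\<exists>x\<in>set Ns. card V \<le> d - 1 + x)"
        using dim_upper[OF assms(1,2,4), of V] \<open>V \<in> \<Delta>\<close> by (simp add: \<Delta>_def Ns_def)
      ultimately show "y \<le> N + d - 1" using Nmax assms(1) by force
    qed
    obtain V where "V \<in> \<Delta>" "card V = d - 1 + N" using dim_lower[OF assms(1,2,4)] NNs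
      by (auto simp: \<Delta>_def Ns_def)
    thus "N + d - 1 \<in> card ` \<Delta>" using assms(1) by force
  qed
  have pw: "\<Delta> \<subseteq> Pow {1..n}" unfolding \<Delta>_def by (rule cc_sub)
  have cd: "\<forall>F\<in>\<Delta>. card F \<le> sr_dim \<Delta>"
    unfolding sr_dim_def using fin_cc by (simp add: \<Delta>_def)
  have "h_series n \<Delta> = (\<Sum>F\<in>\<Delta>. fps_X ^ card F * (1 - fps_X) ^ (sr_dim \<Delta> - card F))"
    using h_series_faces[OF pw cd] .
  also have "\<dots> = (\<Sum>i<d. of_nat (n choose i) * (fps_X ^ i * (1 - fps_X) ^ (N + d - 1 - i)))
      + (\<Sum>x\<leftarrow>Ns. fps_X ^ (d - 1) * ((1 - fps_X) ^ (N + d - 1 - (d - 1) - x) - (1 - fps_X) ^ (N + d - 1 - (d - 1))))"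
    unfolding dim unfolding \<Delta>_def Ns_def
    by (rule main_sum[OF assms(1,2,4)]) (use Nmax assms(1) in \<open>auto simp: Ns_def\<close>)
  finally have H: "h_series n \<Delta> = \<dots>" .
  have "Abs_fps (h_vector n \<Delta>) = h_series n \<Delta>"
    by (rule fps_ext) (simp add: h_vector_def)
  also note H
  also have "(\<Sum>i<d. of_nat (n choose i) * (fps_X ^ i * (1 - fps_X) ^ (N + d - 1 - i)))
      + (\<Sum>x\<leftarrow>Ns. fps_X ^ (d - 1) * ((1 - fps_X) ^ (N + d - 1 - (d - 1) - x) - (1 - fps_X) ^ (N + d - 1 - (d - 1))))
      = fps_of_poly
              ((\<Sum>i=0..d-1. smult (int (n choose i)) (monom 1 i * [:1, -1:] ^ (N + d - i - 1)))
               + monom 1 (d - 1) * (\<Sum>i<length Ns. [:1, -1:] ^ (N - Ns ! i) - [:1, -1:] ^ N))"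
  proof -
    have e1: "{0..d - Suc 0} = {..<d}" using assms(1) by auto
    have e4: "N + d - Suc (x + (d - Suc 0)) = N - x" for x using assms(1) by simp
    have e5: "N + d - Suc (d - Suc 0) = N" using assms(1) by simp
    have e2: "N + d - 1 - (d - 1) = N" using assms(1) by simp
    have e3: "(\<Sum>x\<leftarrow>Ns. f x) = (\<Sum>i<length Ns. f (Ns ! i))" for f :: "nat \<Rightarrow> int fps"
      by (simp add: sum_list_sum_nth atLeast0LessThan)
    show ?thesis
      by (simp add: e1 e2 e3 e4 e5 fps_of_poly_add fps_of_poly_sum fps_of_poly_smult fps_of_poly_mult
          fps_of_poly_monom' fps_of_poly_power fps_of_poly_diff T_poly fps_of_nat sum_distrib_left
          diff_diff_left add.commute)
  qed
  finally show ?thesis by (simp add: Ns_def N_def \<Delta>_def Let_def)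
qed

end
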